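(* Let $p$ be a smooth function on $T^\ast(\mathbb{R}^n)\smallsetminus0$ with $\operatorname{Re}p=\xi_1$, and let $\gamma$ and $\gamma_j$, $j\ge1$, be bicharacteristics of $\operatorname{Re}p=\xi_1$ such that $\operatorname{Im}p$ strongly changes sign from $-$ to $+$ on $\gamma_j$ for each $j$. If $\gamma_j\dashrightarrow\gamma$ as $j\to\infty$, then $L_p(\gamma)\le\liminf_{j\to\infty}L_p(\gamma_j)$.
   Context: Write points of $T^\ast(\mathbb{R}^n)$ as $(x_1,x',\xi_1,\xi')$. A bicharacteristic of $\xi_1$ is $\gamma=[a,b]\times\{w_0\}=\{(t,x',0,\xi'):a\le t\le b\}$, $w_0=(x',0,\xi')$; write $g(t,w)$; $|\gamma|=b-a$. For $\gamma_j=[a_j,b_j]\times\{w_j\}$, $\gamma_j\dashrightarrow\gamma$ means $\liminf a_j\ge a$, $\limsup b_j\le b$, $w_j\to w_0$. $\operatorname{Im}p$ strongly changes sign from $-$ to $+$ on $[a,b]\times\{w_0\}$ if $\operatorname{Im}p(t,w_0)=0$ for $a\le t\le b$ and for every $\varepsilon>0$ there exist $a-\varepsilon<s_-<a$, $b<s_+<b+\varepsilon$ with $\operatorname{Im}p(s_-,w_0)<0<\operatorname{Im}p(s_+,w_0)$. If some sequence of bicharacteristics $\gamma_j$ of $\xi_1$ with this sign change satisfies $\gamma_j\dashrightarrow\gamma$, then $L_p(\gamma)=\inf\liminf_j|\gamma_j|$ over all such sequences. *)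

theory Defs
  imports "HOL-Analysis.Analysis"
begin

text \<open>A point of T*(R^n), n = 1 + CARD('m), written (x1, x', xi1, xi').\<close>
type_synonym 'm cpt = "real \<times> (real^'m) \<times> real \<times> (real^'m)"

definition cotangent_minus_zero :: "'m::finite cpt set" where
  "cotangent_minus_zero = {(x1, x', xi1, xi'). xi1 \<noteq> 0 \<or> xi' \<noteq> 0}"

fun Ck_on :: "nat \<Rightarrow> 'a::real_normed_vector set \<Rightarrow> ('a \<Rightarrow> 'b::real_normed_vector) \<Rightarrow> bool" where
  "Ck_on 0 S f = continuous_on S f"
| "Ck_on (Suc k) S f = (f differentiable_on S \<and>
      (\<forall>v. Ck_on k S (\<lambda>x. frechet_derivative f (at x) v)))"

definition smooth_on :: "'a::real_normed_vector set \<Rightarrow> ('a \<Rightarrow> 'b::real_normed_vector) \<Rightarrow> bool" where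
  "smooth_on S f = (\<forall>k. Ck_on k S f)"

text \<open>A bicharacteristic of xi1: gamma = [a,b] x {w0}, w0 = (x',0,xi'), encoded as (a, b, x', xi'),
  lying in T*(R^n) minus 0 (i.e. xi' /= 0).\<close>
type_synonym 'm bichar = "real \<times> real \<times> (real^'m) \<times> (real^'m)"

definition is_bichar :: "'m::finite bichar \<Rightarrow> bool" where
  "is_bichar \<gamma> = (case \<gamma> of (a, b, x', xi') \<Rightarrow> a \<le> b \<and> xi' \<noteq> 0)"

definition gpt :: "real \<Rightarrow> real^'m \<Rightarrow> real^'m \<Rightarrow> 'm cpt" where
  "gpt t x' xi' = (t, x', 0, xi')"

definition bichar_len :: "'m::finite bichar \<Rightarrow> real" where
  "bichar_len \<gamma> = (case \<gamma> of (a, b, _, _) \<Rightarrow> b - a)"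

definition strong_sign_change :: "('m::finite cpt \<Rightarrow> complex) \<Rightarrow> 'm bichar \<Rightarrow> bool" where
  "strong_sign_change p \<gamma> = (case \<gamma> of (a, b, x', xi') \<Rightarrow>
      (\<forall>t. a \<le> t \<and> t \<le> b \<longrightarrow> Im (p (gpt t x' xi')) = 0) \<and>
      (\<forall>\<epsilon>>0. \<exists>s1 s2. a - \<epsilon> < s1 \<and> s1 < a \<and> b < s2 \<and> s2 < b + \<epsilon> \<and>
          Im (p (gpt s1 x' xi')) < 0 \<and> 0 < Im (p (gpt s2 x' xi'))))"

definition bichar_conv :: "(nat \<Rightarrow> 'm::finite bichar) \<Rightarrow> 'm bichar \<Rightarrow> bool" where
  "bichar_conv G \<gamma> = (case \<gamma> of (a, b, x', xi') \<Rightarrow>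
      liminf (\<lambda>j. ereal (fst (G j))) \<ge> ereal a \<and>
      limsup (\<lambda>j. ereal (fst (snd (G j)))) \<le> ereal b \<and>
      ((\<lambda>j. (fst (snd (snd (G j))), snd (snd (snd (G j))))) \<longlonglongrightarrow> (x', xi')))"

text \<open>L_p(gamma): infimum, over all sequences of bicharacteristics of xi1 on which Im p
  strongly changes sign from - to + and which converge (dashed) to gamma, of liminf |gamma_j|.
  (Only meaningful when such a sequence exists; otherwise this is +infinity.)\<close>
definition Lp :: "('m::finite cpt \<Rightarrow> complex) \<Rightarrow> 'm bichar \<Rightarrow> ereal" where
  "Lp p \<gamma> = Inf {liminf (\<lambda>j. ereal (bichar_len (G j))) | G.
      (\<forall>j. is_bichar (G j) \<and> strong_sign_change p (G j)) \<and> bichar_conv G \<gamma>}"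

end

theory Submission
  imports Defs
begin

definition la :: "'m::finite bichar \<Rightarrow> real" where "la K = fst K"
definition lb :: "'m::finite bichar \<Rightarrow> real" where "lb K = fst (snd K)"
definition lw :: "'m::finite bichar \<Rightarrow> (real^'m) \<times> (real^'m)" where
  "lw K = (fst (snd (snd K)), snd (snd (snd K)))"

lemma conv_iff: "bichar_conv G \<gamma> \<longleftrightarrow>
   liminf (\<lambda>j. ereal (la (G j))) \<ge> ereal (la \<gamma>) \<and>
   limsup (\<lambda>j. ereal (lb (G j))) \<le> ereal (lb \<gamma>) \<and>
   ((\<lambda>j. lw (G j)) \<longlonglongrightarrow> lw \<gamma>)"
  by (cases \<gamma>) (auto simp: bichar_conv_def la_def lb_def lw_def)

lemma conv_ev:
  assumes "bichar_conv G \<gamma>" "e > 0"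
  shows "eventually (\<lambda>j. la (G j) > la \<gamma> - e \<and> lb (G j) < lb \<gamma> + e \<and>
     dist (lw (G j)) (lw \<gamma>) < e) sequentially"
proof -
  have 1: "liminf (\<lambda>j. ereal (la (G j))) \<ge> ereal (la \<gamma>)"
   and 2: "limsup (\<lambda>j. ereal (lb (G j))) \<le> ereal (lb \<gamma>)"
   and 3: "(\<lambda>j. lw (G j)) \<longlonglongrightarrow> lw \<gamma>" using assms(1) unfolding conv_iff by auto
  have "ereal (la \<gamma> - e) < ereal (la \<gamma>)" using assms(2) by simp
  with 1 have a: "eventually (\<lambda>j. ereal (la \<gamma> - e) < ereal (la (G j))) sequentially"
    using le_Liminf_iff[THEN iffD1, OF 1] by blast
  have "ereal (lb \<gamma> + e) > ereal (lb \<gamma>)" using assms(2) by simp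
  with 2 have b: "eventually (\<lambda>j. ereal (lb (G j)) < ereal (lb \<gamma> + e)) sequentially"
    using Limsup_le_iff[THEN iffD1, OF 2] by blast
  have c: "eventually (\<lambda>j. dist (lw (G j)) (lw \<gamma>) < e) sequentially"
    using 3 assms(2) tendstoD by blast
  show ?thesis using a b c by eventually_elim auto
qed

lemma conv_intro:
  assumes "\<And>m. la (K m) > la \<gamma> - 1/(real m+1) \<and> lb (K m) < lb \<gamma> + 1/(real m+1) \<and>
     dist (lw (K m)) (lw \<gamma>) < 1/(real m+1)"
  shows "bichar_conv K \<gamma>"
proof -
  have lim0: "(\<lambda>m. 1/(real m+1)) \<longlonglongrightarrow> 0"
    using LIMSEQ_inverse_real_of_nat by (simp add: inverse_eq_divide add.commute)
  have ev: "eventually (\<lambda>m. 1/(real m+1) < e) sequentially" if "e > 0" for e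
  proof -
    have "eventually (\<lambda>m. dist (1/(real m+1)) 0 < e) sequentially"
      using lim0 that tendstoD by blast
    then show ?thesis by eventually_elim auto
  qed
  have 1: "liminf (\<lambda>j. ereal (la (K j))) \<ge> ereal (la \<gamma>)"
    unfolding le_Liminf_iff
  proof (intro allI impI)
    fix y assume y: "y < ereal (la \<gamma>)"
    show "eventually (\<lambda>j. y < ereal (la (K j))) sequentially"
    proof (cases y)
      case (real r)
      with y have "la \<gamma> - r > 0" by simp
      from ev[OF this] show ?thesis
      proof (rule eventually_mono)
        fix m assume "1/(real m+1) < la \<gamma> - r"
        with assms[of m] real show "y < ereal (la (K m))" by simp
      qed
    next
      case PInf with y show ?thesis by simp
    next
      case MInf then show ?thesis by simp
    qed
  qed
  have 2: "limsup (\<lambda>j. ereal (lb (K j))) \<le> ereal (lb \<gamma>)"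
    unfolding Limsup_le_iff
  proof (intro allI impI)
    fix y assume y: "y > ereal (lb \<gamma>)"
    show "eventually (\<lambda>j. ereal (lb (K j)) < y) sequentially"
    proof (cases y)
      case (real r)
      with y have "r - lb \<gamma> > 0" by simp
      from ev[OF this] show ?thesis
      proof (rule eventually_mono)
        fix m assume "1/(real m+1) < r - lb \<gamma>"
        with assms[of m] real show "ereal (lb (K m)) < y" by simp
      qed
    next
      case PInf then show ?thesis by simp
    next
      case MInf with y show ?thesis by simp
    qed
  qed
  have 3: "(\<lambda>j. lw (K j)) \<longlonglongrightarrow> lw \<gamma>"
  proof (rule tendstoI)
    fix e :: real assume "e > 0"
    from ev[OF this] show "eventually (\<lambda>j. dist (lw (K j)) (lw \<gamma>) < e) sequentially"
    proof (rule eventually_mono)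
      fix m assume "1/(real m+1) < e"
      with assms[of m] show "dist (lw (K m)) (lw \<gamma>) < e" by simp
    qed
  qed
  show ?thesis using 1 2 3 conv_iff by blast
qed


theorem lemma2p15:
  fixes p :: "'m::finite cpt \<Rightarrow> complex"
    and \<gamma> :: "'m bichar" and G :: "nat \<Rightarrow> 'm bichar"
  assumes "smooth_on cotangent_minus_zero p"
    and "\<forall>z \<in> cotangent_minus_zero. Re (p z) = fst (snd (snd z))"
    and "is_bichar \<gamma>"
    and "\<forall>j. is_bichar (G j)"
    and "\<forall>j. strong_sign_change p (G j)"
    and "bichar_conv G \<gamma>"
  shows "Lp p \<gamma> \<le> liminf (\<lambda>j. Lp p (G j))"
proof -
  define L where "L = liminf (\<lambda>j. Lp p (G j))"
  have key: "Lp p \<gamma> \<le> ereal c" if Lc: "L < ereal c" for c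
  proof -
    have "\<exists>K. is_bichar K \<and> strong_sign_change p K \<and> ereal (bichar_len K) < ereal c \<and>
       la K > la \<gamma> - 1/(real m+1) \<and> lb K < lb \<gamma> + 1/(real m+1) \<and>
       dist (lw K) (lw \<gamma>) < 1/(real m+1)" for m
    proof -
      define e where "e = 1/(real m+1)/2"
      have e: "e > 0" unfolding e_def by simp
      from conv_ev[OF assms(6) e] obtain N where N: "\<forall>j\<ge>N. la (G j) > la \<gamma> - e \<and>
        lb (G j) < lb \<gamma> + e \<and> dist (lw (G j)) (lw \<gamma>) < e"
        unfolding eventually_sequentially by blast
      from liminf_upper_bound[OF Lc[unfolded L_def], of N] obtain j where
        j: "j > N" "Lp p (G j) < ereal c" by blast
      then obtain x where x: "x \<in> {liminf (\<lambda>j. ereal (bichar_len (H j))) | H.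
         (\<forall>j. is_bichar (H j) \<and> strong_sign_change p (H j)) \<and> bichar_conv H (G j)}"
        "x < ereal c"
        unfolding Lp_def Inf_less_iff by blast
      then obtain H where H: "\<forall>k. is_bichar (H k) \<and> strong_sign_change p (H k)"
        "bichar_conv H (G j)" "liminf (\<lambda>k. ereal (bichar_len (H k))) < ereal c" by blast
      from conv_ev[OF H(2) e] obtain N2 where N2: "\<forall>k\<ge>N2. la (H k) > la (G j) - e \<and>
        lb (H k) < lb (G j) + e \<and> dist (lw (H k)) (lw (G j)) < e"
        unfolding eventually_sequentially by blast
      from liminf_upper_bound[OF H(3), of N2] obtain k where
        k: "k > N2" "ereal (bichar_len (H k)) < ereal c" by blast
      have Nj: "la (G j) > la \<gamma> - e" "lb (G j) < lb \<gamma> + e" "dist (lw (G j)) (lw \<gamma>) < e"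
        using N j(1) by auto
      have Nk: "la (H k) > la (G j) - e" "lb (H k) < lb (G j) + e" "dist (lw (H k)) (lw (G j)) < e"
        using N2 k(1) by auto
      have "dist (lw (H k)) (lw \<gamma>) \<le> dist (lw (H k)) (lw (G j)) + dist (lw (G j)) (lw \<gamma>)"
        by (rule dist_triangle)
      also have "\<dots> < 2 * e" using Nj Nk by simp
      finally have d: "dist (lw (H k)) (lw \<gamma>) < 1/(real m+1)" unfolding e_def by (simp add: field_simps)
      have e2: "2 * e = 1/(real m+1)" unfolding e_def by (simp add: field_simps)
      have "la (H k) > la \<gamma> - 1/(real m+1)" "lb (H k) < lb \<gamma> + 1/(real m+1)"
        using Nj Nk unfolding e2[symmetric] by auto
      then show ?thesis using H(1) k(2) d by blast
    qed
    then obtain K where K: "\<And>m. is_bichar (K m) \<and> strong_sign_change p (K m) \<and>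
       ereal (bichar_len (K m)) < ereal c \<and>
       la (K m) > la \<gamma> - 1/(real m+1) \<and> lb (K m) < lb \<gamma> + 1/(real m+1) \<and>
       dist (lw (K m)) (lw \<gamma>) < 1/(real m+1)" by (metis choice)
    have conv: "bichar_conv K \<gamma>" by (rule conv_intro) (use K in blast)
    have "Lp p \<gamma> \<le> liminf (\<lambda>m. ereal (bichar_len (K m)))"
      unfolding Lp_def by (rule Inf_lower) (use K conv in blast)
    also have "\<dots> \<le> liminf (\<lambda>m. ereal c)"
      by (rule Liminf_mono) (use K in \<open>auto intro!: always_eventually less_imp_le\<close>)
    also have "\<dots> = ereal c" by (simp add: Liminf_const)
    finally show ?thesis .
  qed
  show ?thesis
  proof (rule ccontr)
    assume "\<not> Lp p \<gamma> \<le> liminf (\<lambda>j. Lp p (G j))"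
    then have "L < Lp p \<gamma>" unfolding L_def by simp
    then obtain c where "L < ereal c" "ereal c < Lp p \<gamma>" using ereal_dense2 by blast
    with key show False by force
  qed
qed

end
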